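(* Let $K$ be a compact space whose topology is the order topology of a linear order on $K$, and assume $K$ is fragmentable. Then $K$ is almost totally disconnected.
   Context: A quasi metric on a set $K$ is a symmetric map $d:K\times K\to[0,+\infty)$ such that $d(x,y)=0$ iff $x=y$ (the triangle inequality is not required). A map $d:K\times K\to[0,+\infty)$ fragments a topological space $K$ if for every nonempty closed subset $L\subseteq K$ and every $\varepsilon>0$ there is a nonempty relatively open subset $U$ of $L$ with $\sup\{d(x,y):x,y\in U\}<\varepsilon$. A compact space $K$ is fragmentable if there exists a quasi metric on $K$ which fragments $K$. For a set $\Gamma$, $\Sigma_0^1[0,1]^\Gamma$ denotes the subspace of $[0,1]^\Gamma$ (product topology) consisting of those $x$ such that $x_\gamma\in\{0,1\}$ for all but countably many $\gamma\in\Gamma$. A compact space is almost totally disconnected if it is homeomorphic to a subspace of $\Sigma_0^1[0,1]^\Gamma$ for some set $\Gamma$. *)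

theory Defs
  imports "HOL-Analysis.Analysis"
begin

definition quasi_metric_on :: "'a set \<Rightarrow> ('a \<Rightarrow> 'a \<Rightarrow> real) \<Rightarrow> bool" where
  "quasi_metric_on K d \<longleftrightarrow>
     (\<forall>x\<in>K. \<forall>y\<in>K. d x y \<ge> 0 \<and> d x y = d y x \<and> (d x y = 0 \<longleftrightarrow> x = y))"

text \<open>Since U is nonempty, "sup < eps" is written as: some c < eps bounds d on U x U.\<close>
definition fragments :: "('a \<Rightarrow> 'a \<Rightarrow> real) \<Rightarrow> 'a topology \<Rightarrow> bool" where
  "fragments d X \<longleftrightarrow>
     (\<forall>L. closedin X L \<and> L \<noteq> {} \<longrightarrow>
        (\<forall>\<epsilon>>0. \<exists>U. openin (subtopology X L) U \<and> U \<noteq> {} \<and>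
                    (\<exists>c<\<epsilon>. \<forall>x\<in>U. \<forall>y\<in>U. d x y \<le> c)))"

definition fragmentable :: "'a topology \<Rightarrow> bool" where
  "fragmentable X \<longleftrightarrow> (\<exists>d. quasi_metric_on (topspace X) d \<and> fragments d X)"

definition cube_top :: "'i set \<Rightarrow> ('i \<Rightarrow> real) topology" where
  "cube_top \<Gamma> = product_topology (\<lambda>_. top_of_set {0..1}) \<Gamma>"

definition Sigma01 :: "'i set \<Rightarrow> ('i \<Rightarrow> real) set" where
  "Sigma01 \<Gamma> = {x \<in> topspace (cube_top \<Gamma>). countable {\<gamma>\<in>\<Gamma>. x \<gamma> \<notin> {0, 1}}}"

text \<open>The index set Gamma is taken inside the type of pairs of points of the space
  (this loses no generality for compact spaces).\<close>
definition almost_totally_disconnected :: "'a topology \<Rightarrow> bool" where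
  "almost_totally_disconnected X \<longleftrightarrow>
     (\<exists>(\<Gamma>::('a \<times> 'a) set) S. S \<subseteq> Sigma01 \<Gamma> \<and>
        X homeomorphic_space subtopology (cube_top \<Gamma>) S)"

end

theory Submission
  imports Defs
begin

definition Dn :: "'a::linorder \<Rightarrow> 'a \<Rightarrow> bool" where
  "Dn u v \<longleftrightarrow> (\<forall>s t. u \<le> s \<and> s < t \<and> t \<le> v \<longrightarrow> (\<exists>z. s < z \<and> z < t))"

lemma Dn_get: "Dn u v \<Longrightarrow> u \<le> s \<Longrightarrow> s < t \<Longrightarrow> t \<le> v \<Longrightarrow> \<exists>z. s < z \<and> z < t"
  unfolding Dn_def by blast

lemma Dn_sub: "Dn u v \<Longrightarrow> u \<le> s \<Longrightarrow> t \<le> v \<Longrightarrow> Dn s t"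
  unfolding Dn_def by (meson order_trans)

lemma dense_meet:
  fixes d :: "'a::linorder_topology \<Rightarrow> 'a \<Rightarrow> real"
  assumes frag: "fragments d euclidean"
    and Fmax: "\<And>s t. s<t \<Longrightarrow> (\<exists>z. s<z \<and> z<t) \<Longrightarrow> (\<exists>c<e. \<forall>u\<in>{s<..<t}. \<forall>v\<in>{s<..<t}. d u v \<le> c)
        \<Longrightarrow> (\<forall>q\<in>F. {s<..<t} \<inter> {fst q<..<snd q} = {}) \<Longrightarrow> (s,t) \<in> F"
    and e: "e > 0" and uv: "u < v" and D: "Dn u v"
  shows "\<exists>p\<in>F. \<exists>z. fst p<z \<and> z<snd p \<and> u<z \<and> z<v"
proof (rule ccontr)
  assume H: "\<not> ?thesis"
  obtain u' where u': "u < u'" "u' < v" using D uv unfolding Dn_def by blast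
  obtain v' where v': "u' < v'" "v' < v" using D u' unfolding Dn_def by (meson order.strict_implies_order order_refl)
  have "closedin euclidean {u'..v'}" "{u'..v'} \<noteq> {}" using v' by auto
  then obtain U c where U: "openin (subtopology euclidean {u'..v'}) U" "U \<noteq> {}" "c < e"
      "\<forall>x\<in>U. \<forall>y\<in>U. d x y \<le> c"
    using frag e unfolding fragments_def by meson
  then obtain G where G: "open G" "U = G \<inter> {u'..v'}" by (auto simp: openin_subtopology)
  obtain z where z: "z \<in> U" using U by auto
  have "\<exists>s t. s < t \<and> (\<exists>w. s<w \<and> w<t) \<and> {s<..<t} \<subseteq> U \<and> {s<..<t} \<subseteq> {u<..<v}"
  proof (cases "z < v'")
    case True
    obtain b where b: "b > z" "{z..<b} \<subseteq> G" using open_right[OF G(1) _ True] z G by auto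
    obtain w1 where w1: "z < w1" "w1 < min b v'"
    proof -
      have "u \<le> z" "min b v' \<le> v" using z G u' v' by (auto simp: min_le_iff_disj)
      then show ?thesis using that Dn_get[OF D, of z "min b v'"] True b by auto
    qed
    have zz: "u' \<le> z" using z G by auto
    have "u \<le> z" using zz u' by simp
    moreover have "w1 \<le> v" using w1 v' by (metis less_imp_le less_trans min_less_iff_conj)
    ultimately obtain w2 where w2: "z < w2" "w2 < w1"
      using Dn_get[OF D, of z w1] w1 by blast
    have "{z<..<w1} \<subseteq> {z..<b}" using w1 by (auto intro: order.strict_trans)
    then have sG: "{z<..<w1} \<subseteq> G" using b by blast
    show ?thesis
      apply (rule exI[of _ z], rule exI[of _ w1])
      using sG w1 w2 b z G u' v' zz by (auto intro: order.strict_trans order.strict_trans1 order.strict_trans2 less_imp_le)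
  next
    case False
    then have zv: "z = v'" using z G by auto
    have "u' < z" using zv v' by auto
    obtain b where b: "b < z" "{b<..z} \<subseteq> G" using open_left[OF G(1) _ \<open>u' < z\<close>] z G by auto
    have m1: "u \<le> max b u'" using u' by (simp add: le_max_iff_disj less_imp_le)
    have m2: "max b u' < z" using b \<open>u' < z\<close> by simp
    have m3: "z \<le> v" using zv v' by simp
    obtain w1 where w1: "max b u' < w1" "w1 < z"
      using Dn_get[OF D, OF m1 m2 m3] by blast
    have m4: "u \<le> w1" using le_less_trans[OF m1 w1(1)] by (rule less_imp_le)
    obtain w2 where w2: "w1 < w2" "w2 < z"
      using Dn_get[OF D, OF m4 w1(2) m3] by blast
    have "{w1<..<z} \<subseteq> {b<..z}" using w1 by (auto intro: order.strict_trans1)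
    then have sG: "{w1<..<z} \<subseteq> G" using b by blast
    show ?thesis
      apply (rule exI[of _ w1], rule exI[of _ z])
      using sG w1 w2 b z G u' v' zv m1 by (auto intro: order.strict_trans order.strict_trans1 order.strict_trans2 less_imp_le)
  qed
  then obtain s t where st: "s < t" "\<exists>w. s<w \<and> w<t" "{s<..<t} \<subseteq> U" "{s<..<t} \<subseteq> {u<..<v}"
    by blast
  have "(s,t) \<in> F"
  proof (rule Fmax[OF st(1,2)])
    show "\<exists>c<e. \<forall>u\<in>{s<..<t}. \<forall>v\<in>{s<..<t}. d u v \<le> c" using U st(3) by blast
    show "\<forall>q\<in>F. {s<..<t} \<inter> {fst q<..<snd q} = {}"
      using H st(4) by fastforce
  qed
  then show False using H st by fastforce
qed

lemma qm_nonneg: "quasi_metric_on UNIV d \<Longrightarrow> d x y \<ge> 0"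
  unfolding quasi_metric_on_def by blast

lemma qm_zero: "quasi_metric_on UNIV d \<Longrightarrow> d x y = 0 \<Longrightarrow> x = y"
  unfolding quasi_metric_on_def by blast

lemma in_between:
  fixes p :: "'a::linorder"
  shows "p \<in> {a..b} \<Longrightarrow> c < a \<Longrightarrow> b < e \<Longrightarrow> c < p \<and> p < e"
proof -
  assume "p \<in> {a..b}" "c < a" "b < e"
  then have "a \<le> p" "p \<le> b" by auto
  then show ?thesis using less_le_trans[OF \<open>c < a\<close>] le_less_trans[OF _ \<open>b < e\<close>] by blast
qed

lemma stickout:
  fixes a b x y p :: "'a::linorder"
  assumes "a < p" "p < b" "x < p" "p < y" "\<not> {a<..<b} \<subseteq> {x<..<y}"
  shows "(a < x \<and> x < b) \<or> (a < y \<and> y < b)"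
proof -
  from assms(5) obtain z where "z \<in> {a<..<b}" "z \<notin> {x<..<y}" by blast
  then have z: "a < z" "z < b" "\<not> (x < z \<and> z < y)" by auto
  show ?thesis
  proof (cases "z \<le> x")
    case True
    have "a < x" using z(1) True by (rule less_le_trans)
    moreover have "x < b" using assms(3,2) by (rule less_trans)
    ultimately show ?thesis by blast
  next
    case False
    then have "y \<le> z" using z by auto
    then have "y < b" using z(2) by (rule le_less_trans)
    moreover have "a < y" using assms(1,4) by (rule less_trans)
    ultimately show ?thesis by blast
  qed
qed

lemma small_le0:
  fixes m :: real
  assumes "\<And>n. m < 1 / real (Suc n)"
  shows "m \<le> 0"
proof (rule ccontr)
  assume "\<not> m \<le> 0"
  then have "0 < m" by simp
  then obtain n where "inverse (real (Suc n)) < m" using reals_Archimedean by blast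
  then show False using assms[of n] by (simp add: inverse_eq_divide)
qed

lemma sep:
  fixes d :: "'a::linorder_topology \<Rightarrow> 'a \<Rightarrow> real" and FF :: "nat \<Rightarrow> ('a\<times>'a) set"
  assumes cpt: "compact (UNIV::'a set)"
    and qm: "quasi_metric_on UNIV d"
    and frag: "fragments d euclidean"
    and Fsub: "\<And>n p. p \<in> FF n \<Longrightarrow> \<exists>c<1/real (Suc n). \<forall>u\<in>{fst p<..<snd p}. \<forall>v\<in>{fst p<..<snd p}. d u v \<le> c"
    and Fmax: "\<And>n s t. s<t \<Longrightarrow> (\<exists>z. s<z \<and> z<t) \<Longrightarrow> (\<exists>c<1/real (Suc n). \<forall>u\<in>{s<..<t}. \<forall>v\<in>{s<..<t}. d u v \<le> c)
        \<Longrightarrow> (\<forall>q\<in>FF n. {s<..<t} \<inter> {fst q<..<snd q} = {}) \<Longrightarrow> (s,t) \<in> FF n"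
    and xy: "x < y" and D: "Dn x y"
  shows "\<exists>n. \<exists>p\<in>FF n. {fst p<..<snd p} \<subseteq> {x<..<y}"
proof -
  define cond where "cond st \<longleftrightarrow> fst st < snd st \<and> x \<le> fst st \<and> snd st \<le> y" for st :: "'a \<times> 'a"
  define R where "R n st r \<longleftrightarrow> fst (fst r) < snd (fst r) \<and> fst st < fst (fst r) \<and> snd (fst r) < snd st
      \<and> fst (snd r) < fst (fst r) \<and> snd (fst r) < snd (snd r) \<and> snd r \<in> FF n"
    for n st and r :: "('a\<times>'a)\<times>('a\<times>'a)"
  have step: "\<exists>r. cond st \<longrightarrow> R n st r" for n st
  proof (cases "cond st")
    case False then show ?thesis by blast
  next
    case True
    then have c: "fst st < snd st" "x \<le> fst st" "snd st \<le> y" unfolding cond_def by auto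
    have Dst: "Dn (fst st) (snd st)" using Dn_sub[OF D c(2,3)] .
    have e: "(0::real) < 1 / real (Suc n)" by simp
    obtain p z where pz: "p \<in> FF n" "fst p < z" "z < snd p" "fst st < z" "z < snd st"
      using dense_meet[OF frag Fmax e c(1) Dst] by blast
    have "x \<le> z" using less_imp_le[OF le_less_trans[OF c(2) pz(4)]] .
    moreover have "min (snd p) (snd st) \<le> y" using c(3) by (simp add: min.coboundedI2)
    moreover have "z < min (snd p) (snd st)" using pz by simp
    ultimately obtain w where w: "z < w" "w < min (snd p) (snd st)"
      using Dn_get[OF D] by blast
    show ?thesis
      apply (rule exI[of _ "((z,w),p)"])
      using w pz unfolding R_def by auto
  qed
  define g where "g n st = (SOME r. cond st \<longrightarrow> R n st r)" for n st
  have g: "\<And>n st. cond st \<Longrightarrow> R n st (g n st)"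
    unfolding g_def using someI_ex[OF step] by blast
  define S where "S = rec_nat (x,y) (\<lambda>n st. fst (g n st))"
  have S0: "S 0 = (x,y)" and SS: "S (Suc n) = fst (g n (S n))" for n by (simp_all add: S_def)
  have inv: "cond (S n)" for n
  proof (induction n)
    case 0 then show ?case using xy by (simp add: S0 cond_def)
  next
    case (Suc n)
    then have "R n (S n) (g n (S n))" by (rule g)
    then have r: "fst (S n) < fst (S (Suc n))" "snd (S (Suc n)) < snd (S n)"
      "fst (S (Suc n)) < snd (S (Suc n))" unfolding R_def SS by auto
    have c: "x \<le> fst (S n)" "snd (S n) \<le> y" using Suc unfolding cond_def by auto
    have "x \<le> fst (S (Suc n))" using less_imp_le[OF le_less_trans[OF c(1) r(1)]] .
    moreover have "snd (S (Suc n)) \<le> y" using less_imp_le[OF less_le_trans[OF r(2) c(2)]] .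
    ultimately show ?case using r(3) unfolding cond_def by blast
  qed
  have Rn: "R n (S n) (g n (S n))" for n using g inv by blast
  define C where "C n = {fst (S n)..snd (S n)}" for n
  have Cdec: "C (Suc n) \<subseteq> C n" for n
  proof -
    have "fst (S n) \<le> fst (S (Suc n))" "snd (S (Suc n)) \<le> snd (S n)"
      using Rn[of n] unfolding R_def SS by auto
    then show ?thesis unfolding C_def by (simp add: atLeastatMost_subset_iff)
  qed
  have Cmono: "m \<le> n \<Longrightarrow> C n \<subseteq> C m" for m n
    by (rule lift_Suc_antimono_le[of C, OF Cdec])
  have Cne: "C n \<noteq> {}" for n using inv[of n] unfolding C_def cond_def by auto
  have "UNIV \<inter> (\<Inter>i\<in>UNIV. C i) \<noteq> {}"
  proof (rule compact_imp_fip_image[OF cpt])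
    show "closed (C i)" for i unfolding C_def by simp
    fix I' :: "nat set" assume fin: "finite I'"
    show "UNIV \<inter> (\<Inter>i\<in>I'. C i) \<noteq> {}"
    proof (cases "I' = {}")
      case True then show ?thesis by simp
    next
      case False
      have "C (Max I') \<subseteq> C i" if "i \<in> I'" for i using Cmono[OF Max_ge[OF fin that]] .
      then have "C (Max I') \<subseteq> (\<Inter>i\<in>I'. C i)" by (rule INT_greatest)
      then show ?thesis using Cne[of "Max I'"] by blast
    qed
  qed
  then obtain p where p: "\<And>n. p \<in> C n" by blast
  have "x < fst (S (Suc 0))" "snd (S (Suc 0)) < y" using Rn[of 0] unfolding R_def SS[of 0] S0 by auto
  then have pxy: "x < p" "p < y" using in_between[OF p[of "Suc 0", unfolded C_def]] by auto
  show ?thesis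
  proof (rule ccontr)
    assume H: "\<not> ?thesis"
    have "min (d x p) (d y p) < 1 / real (Suc n)" for n
    proof -
      let ?P = "snd (g n (S n))"
      have P0: "?P \<in> FF n" "fst ?P < fst (S (Suc n))" "snd (S (Suc n)) < snd ?P"
        using Rn[of n] unfolding R_def SS by auto
      have P: "?P \<in> FF n" "fst ?P < p" "p < snd ?P"
        using P0 in_between[OF p[of "Suc n", unfolded C_def] P0(2,3)] by auto
      have "(fst ?P < x \<and> x < snd ?P) \<or> (fst ?P < y \<and> y < snd ?P)"
      proof -
        have "\<not> {fst ?P<..<snd ?P} \<subseteq> {x<..<y}" using H P(1) by blast
        then show ?thesis using stickout[OF P(2,3) pxy] by blast
      qed
      moreover obtain c where c: "c < 1 / real (Suc n)"
        "\<forall>u\<in>{fst ?P<..<snd ?P}. \<forall>v\<in>{fst ?P<..<snd ?P}. d u v \<le> c"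
        using Fsub[OF P(1)] by blast
      have pin: "p \<in> {fst ?P<..<snd ?P}" using P by simp
      ultimately have "x \<in> {fst ?P<..<snd ?P} \<or> y \<in> {fst ?P<..<snd ?P}" by auto
      then have "d x p \<le> c \<or> d y p \<le> c" using pin c(2) by blast
      then have "min (d x p) (d y p) \<le> c" by linarith
      then show ?thesis using c(1) by linarith
    qed
    then have "min (d x p) (d y p) \<le> 0" by (rule small_le0)
    moreover have "d x p \<ge> 0" "d y p \<ge> 0" using qm_nonneg[OF qm] by auto
    ultimately have "d x p = 0 \<or> d y p = 0" by linarith
    then have "x = p \<or> y = p" using qm_zero[OF qm] by blast
    then show False using pxy by auto
  qed
qed

lemma subsingleton_countable: "(\<And>p q. p \<in> A \<Longrightarrow> q \<in> A \<Longrightarrow> p = q) \<Longrightarrow> countable A"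
proof (cases "A = {}")
  case False
  assume H: "\<And>p q. p \<in> A \<Longrightarrow> q \<in> A \<Longrightarrow> p = q"
  from False obtain a where a: "a \<in> A" by blast
  then have "A \<subseteq> {a}" using H by blast
  then show ?thesis using countable_subset[of A "{a}"] by simp
qed simp

lemma key:
  fixes d :: "'a::linorder_topology \<Rightarrow> 'a \<Rightarrow> real"
  assumes cpt: "compact (UNIV::'a set)"
    and qm: "quasi_metric_on UNIV d"
    and frag: "fragments d euclidean"
  shows "\<exists>\<Gamma>::('a\<times>'a) set. (\<forall>\<gamma>\<in>\<Gamma>. fst \<gamma> < snd \<gamma>) \<and> (\<forall>x y. x<y \<longrightarrow> (\<exists>\<gamma>\<in>\<Gamma>. x \<le> fst \<gamma> \<and> snd \<gamma> \<le> y))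
     \<and> (\<forall>x. countable {\<gamma>\<in>\<Gamma>. fst \<gamma> < x \<and> x < snd \<gamma>})"
proof -
  define Cand where "Cand n = {p. fst p < snd p \<and> (\<exists>z. fst p < z \<and> z < snd p) \<and>
     (\<exists>c<1/real (Suc n). \<forall>u\<in>{fst p<..<snd p}. \<forall>v\<in>{fst p<..<snd p}. d u v \<le> c)}" for n
  define Adm where "Adm n = {F. F \<subseteq> Cand n \<and>
     (\<forall>p\<in>F. \<forall>q\<in>F. p \<noteq> q \<longrightarrow> {fst p<..<snd p} \<inter> {fst q<..<snd q} = {})}" for n
  have AdmD1: "F \<subseteq> Cand n" if "F \<in> Adm n" for F n using that unfolding Adm_def mem_Collect_eq by (rule conjunct1)
  have AdmD2: "{fst p<..<snd p} \<inter> {fst q<..<snd q} = {}"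
    if "F \<in> Adm n" "p \<in> F" "q \<in> F" "p \<noteq> q" for F n p q
  proof -
    have "\<forall>p\<in>F. \<forall>q\<in>F. p \<noteq> q \<longrightarrow> {fst p<..<snd p} \<inter> {fst q<..<snd q} = {}"
      using that(1) unfolding Adm_def mem_Collect_eq by (rule conjunct2)
    then show ?thesis using that(2-4) by blast
  qed
  have CandD: "\<exists>z. fst p < z \<and> z < snd p" "\<exists>c<1/real (Suc n). \<forall>u\<in>{fst p<..<snd p}. \<forall>v\<in>{fst p<..<snd p}. d u v \<le> c"
    "fst p < snd p"
    if "p \<in> Cand n" for p n using that unfolding Cand_def mem_Collect_eq by auto
  have Z: "\<exists>M\<in>Adm n. \<forall>X\<in>Adm n. M \<subseteq> X \<longrightarrow> X = M" for n
  proof (rule Zorn_Lemma, intro ballI)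
    fix C assume "C \<in> chains (Adm n)"
    then have CA: "C \<subseteq> Adm n" and ch: "chain\<^sub>\<subseteq> C" by (auto simp: chains_def)
    show "\<Union>C \<in> Adm n" unfolding Adm_def
    proof (intro CollectI conjI ballI impI)
      show "\<Union>C \<subseteq> Cand n" using CA AdmD1 by blast
      fix p q assume pq: "p \<in> \<Union>C" "q \<in> \<Union>C" "p \<noteq> q"
      then obtain X Y where XY: "X \<in> C" "Y \<in> C" "p \<in> X" "q \<in> Y" by blast
      from ch XY(1,2) have "X \<subseteq> Y \<or> Y \<subseteq> X" unfolding chain_subset_def by blast
      then obtain W where "W \<in> C" "p \<in> W" "q \<in> W" using XY by blast
      then show "{fst p<..<snd p} \<inter> {fst q<..<snd q} = {}" using CA pq(3) AdmD2 by blast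
    qed
  qed
  define FF where "FF n = (SOME M. M \<in> Adm n \<and> (\<forall>X\<in>Adm n. M \<subseteq> X \<longrightarrow> X = M))" for n
  have FF: "FF n \<in> Adm n \<and> (\<forall>X\<in>Adm n. FF n \<subseteq> X \<longrightarrow> X = FF n)" for n
    unfolding FF_def using someI_ex[OF Z[of n, unfolded Bex_def]] .
  have FC: "FF n \<subseteq> Cand n" for n using FF[of n] AdmD1 by blast
  have Fdisj: "\<And>p q. p \<in> FF n \<Longrightarrow> q \<in> FF n \<Longrightarrow> p \<noteq> q \<Longrightarrow> {fst p<..<snd p} \<inter> {fst q<..<snd q} = {}" for n
    using FF[of n] AdmD2 by blast
  have Fsub: "\<exists>c<1/real (Suc n). \<forall>u\<in>{fst p<..<snd p}. \<forall>v\<in>{fst p<..<snd p}. d u v \<le> c"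
    if "p \<in> FF n" for n p using FC[of n] that CandD(2) by blast
  have Fmax: "(s,t) \<in> FF n" if st: "s<t" "\<exists>z. s<z \<and> z<t"
     "\<exists>c<1/real (Suc n). \<forall>u\<in>{s<..<t}. \<forall>v\<in>{s<..<t}. d u v \<le> c"
     "\<forall>q\<in>FF n. {s<..<t} \<inter> {fst q<..<snd q} = {}" for n s t
  proof -
    have "insert (s,t) (FF n) \<in> Adm n"
      unfolding Adm_def
    proof (intro CollectI conjI ballI impI)
      have "(s,t) \<in> Cand n" unfolding Cand_def using st(1,2,3) by simp
      then show "insert (s, t) (FF n) \<subseteq> Cand n" using FC[of n] by blast
      fix p q assume pq: "p \<in> insert (s, t) (FF n)" "q \<in> insert (s, t) (FF n)" "p \<noteq> q"
      show "{fst p<..<snd p} \<inter> {fst q<..<snd q} = {}"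
      proof (cases "p = (s,t)")
        case True
        have "q \<in> FF n" using pq True by auto
        then show ?thesis using st(4) True by simp
      next
        case False
        note pF = False
        show ?thesis
        proof (cases "q = (s,t)")
          case True
          have "p \<in> FF n" using pq(1) pF by auto
          then have "{s<..<t} \<inter> {fst p<..<snd p} = {}" using st(4) by blast
          then show ?thesis using True by (simp add: Int_commute)
        next
          case False
          have "p \<in> FF n" "q \<in> FF n" using pq pF False by auto
          then show ?thesis by (rule Fdisj[OF _ _ pq(3)])
        qed
      qed
    qed
    then have "insert (s,t) (FF n) = FF n" using FF[of n] by blast
    then show ?thesis by blast
  qed
  define J where "J = {p::'a\<times>'a. fst p < snd p \<and> \<not> (\<exists>z. fst p < z \<and> z < snd p)}"
  define \<Gamma> where "\<Gamma> = J \<union> (\<Union>n. FF n)"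
  show ?thesis
  proof (intro exI[of _ \<Gamma>] conjI allI impI ballI)
    fix \<gamma> assume "\<gamma> \<in> \<Gamma>"
    then have "\<gamma> \<in> J \<or> (\<exists>n. \<gamma> \<in> Cand n)" using FC unfolding \<Gamma>_def by blast
    then show "fst \<gamma> < snd \<gamma>" using CandD(3) unfolding J_def by blast
  next
    fix x y :: 'a assume xy: "x < y"
    show "\<exists>\<gamma>\<in>\<Gamma>. x \<le> fst \<gamma> \<and> snd \<gamma> \<le> y"
    proof (cases "\<exists>a b. x \<le> a \<and> a < b \<and> b \<le> y \<and> \<not> (\<exists>z. a < z \<and> z < b)")
      case True
      then obtain a b where "x \<le> a" "a < b" "b \<le> y" "\<not> (\<exists>z. a < z \<and> z < b)" by blast
      then have "(a,b) \<in> J" unfolding J_def by simp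
      then have "(a,b) \<in> \<Gamma>" unfolding \<Gamma>_def by blast
      with \<open>x \<le> a\<close> \<open>b \<le> y\<close> show ?thesis by force
    next
      case False
      then have D: "Dn x y" unfolding Dn_def by blast
      have "\<exists>n. \<exists>p\<in>FF n. {fst p<..<snd p} \<subseteq> {x<..<y}"
      proof (rule sep[where FF=FF and d=d, OF cpt qm frag])
        show "\<exists>c<1/real (Suc n). \<forall>u\<in>{fst p<..<snd p}. \<forall>v\<in>{fst p<..<snd p}. d u v \<le> c"
          if "p \<in> FF n" for n p using Fsub that by blast
        show "(s,t) \<in> FF n" if "s<t" "\<exists>z. s<z \<and> z<t"
          "\<exists>c<1/real (Suc n). \<forall>u\<in>{s<..<t}. \<forall>v\<in>{s<..<t}. d u v \<le> c"
          "\<forall>q\<in>FF n. {s<..<t} \<inter> {fst q<..<snd q} = {}" for n s t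
          using Fmax that by blast
      qed (fact xy D)+
      then obtain n p where p: "p \<in> FF n" "{fst p<..<snd p} \<subseteq> {x<..<y}" by blast
      obtain z where z: "fst p < z" "z < snd p" using FC[of n] p(1) CandD(1) by blast
      have zxy: "x < z" "z < y" using z p(2) by auto
      have "x \<le> fst p"
      proof (rule ccontr)
        assume "\<not> x \<le> fst p"
        then have "fst p < x" by simp
        moreover have "x < snd p" using zxy(1) z(2) by (rule less_trans)
        ultimately have "x \<in> {fst p<..<snd p}" by simp
        then show False using p(2) by auto
      qed
      moreover have "snd p \<le> y"
      proof (rule ccontr)
        assume "\<not> snd p \<le> y"
        then have "y < snd p" by simp
        moreover have "fst p < y" using z(1) zxy(2) by (rule less_trans)
        ultimately have "y \<in> {fst p<..<snd p}" by simp
        then show False using p(2) by auto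
      qed
      ultimately show ?thesis using p(1) unfolding \<Gamma>_def by blast
    qed
  next
    fix x :: 'a
    have "{\<gamma>\<in>\<Gamma>. fst \<gamma> < x \<and> x < snd \<gamma>} \<subseteq> (\<Union>n. {\<gamma>\<in>FF n. fst \<gamma> < x \<and> x < snd \<gamma>})"
      unfolding \<Gamma>_def J_def by blast
    moreover have "countable (\<Union>n. {\<gamma>\<in>FF n. fst \<gamma> < x \<and> x < snd \<gamma>})"
    proof (rule countable_UN)
      fix n
      show "countable {\<gamma>\<in>FF n. fst \<gamma> < x \<and> x < snd \<gamma>}"
      proof (rule subsingleton_countable)
        fix p q assume "p \<in> {\<gamma>\<in>FF n. fst \<gamma> < x \<and> x < snd \<gamma>}" "q \<in> {\<gamma>\<in>FF n. fst \<gamma> < x \<and> x < snd \<gamma>}"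
        then have "p \<in> FF n" "q \<in> FF n" "x \<in> {fst p<..<snd p}" "x \<in> {fst q<..<snd q}" by auto
        then show "p = q" using Fdisj[of p n q] by blast
      qed
    qed simp
    ultimately show "countable {\<gamma>\<in>\<Gamma>. fst \<gamma> < x \<and> x < snd \<gamma>}" by (rule countable_subset)
  qed
qed

lemma Hausdorff_linorder: "Hausdorff_space (euclidean :: 'a::linorder_topology topology)"
  unfolding Hausdorff_space_def disjnt_def using hausdorff by (metis open_openin)

theorem theorem1:
  assumes "compact (UNIV :: 'a::linorder_topology set)"
    and "fragmentable (euclidean :: 'a topology)"
  shows "almost_totally_disconnected (euclidean :: 'a topology)"
proof -
  have cpt: "compact (UNIV :: 'a set)" by fact
  obtain d where qm: "quasi_metric_on UNIV d" and frag: "fragments d (euclidean :: 'a topology)"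
    using assms(2) unfolding fragmentable_def by auto
  obtain \<Gamma> :: "('a\<times>'a) set" where G1: "\<forall>\<gamma>\<in>\<Gamma>. fst \<gamma> < snd \<gamma>"
    and G2: "\<forall>x y. x<y \<longrightarrow> (\<exists>\<gamma>\<in>\<Gamma>. x \<le> fst \<gamma> \<and> snd \<gamma> \<le> y)"
    and G3: "\<forall>x. countable {\<gamma>\<in>\<Gamma>. fst \<gamma> < x \<and> x < snd \<gamma>}"
    using key[OF cpt qm frag] by blast
  have cs: "compact_space (euclidean :: 'a topology)" using cpt by (simp add: compact_space_def)
  have ns: "normal_space (euclidean :: 'a topology)"
    using compact_Hausdorff_or_regular_imp_normal_space cs Hausdorff_linorder by blast
  have ex: "\<exists>f. continuous_map euclidean (top_of_set {0..1::real}) f \<and> f ` {..fst \<gamma>} \<subseteq> {0} \<and> f ` {snd \<gamma>..} \<subseteq> {1}"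
    if "\<gamma> \<in> \<Gamma>" for \<gamma>
  proof -
    have lt: "fst \<gamma> < snd \<gamma>" using G1 that by blast
    have "disjnt {..fst \<gamma>} {snd \<gamma>..}"
      unfolding disjnt_def using lt by (auto dest: order_trans simp: not_le[symmetric])
    moreover have "closedin euclidean {..fst \<gamma>}" "closedin euclidean {snd \<gamma>..}"
      by (simp_all add: closed_closedin[symmetric])
    ultimately obtain f where "continuous_map euclidean (top_of_set {0..1::real}) f"
      "f ` {..fst \<gamma>} \<subseteq> {0}" "f ` {snd \<gamma>..} \<subseteq> {1}"
      using Urysohn_lemma[OF ns, of "{..fst \<gamma>}" "{snd \<gamma>..}" 0 1] by auto
    then show ?thesis by blast
  qed
  define F where "F (\<gamma>::'a\<times>'a) = (SOME f. continuous_map euclidean (top_of_set {0..1::real}) f \<and> f ` {..fst \<gamma>} \<subseteq> {0} \<and> f ` {snd \<gamma>..} \<subseteq> {1})" for \<gamma>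
  have F: "continuous_map euclidean (top_of_set {0..1::real}) (F \<gamma>)" "F \<gamma> ` {..fst \<gamma>} \<subseteq> {0}" "F \<gamma> ` {snd \<gamma>..} \<subseteq> {1}"
    if "\<gamma> \<in> \<Gamma>" for \<gamma>
    using someI_ex[OF ex[OF that]] unfolding F_def by blast+
  have F0: "F \<gamma> x = 0" if "\<gamma> \<in> \<Gamma>" "x \<le> fst \<gamma>" for \<gamma> x using F(2)[OF that(1)] that(2) by auto
  have F1: "F \<gamma> x = 1" if "\<gamma> \<in> \<Gamma>" "snd \<gamma> \<le> x" for \<gamma> x using F(3)[OF that(1)] that(2) by auto
  define e where "e (x::'a) = restrict (\<lambda>\<gamma>. F \<gamma> x) \<Gamma>" for x
  have ce: "continuous_map euclidean (cube_top \<Gamma>) e"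
    unfolding cube_top_def continuous_map_componentwise
  proof (intro conjI ballI)
    show "e ` topspace euclidean \<subseteq> extensional \<Gamma>" unfolding e_def by auto
    fix k assume "k \<in> \<Gamma>"
    then show "continuous_map euclidean (top_of_set {0..1}) (\<lambda>x. e x k)"
      unfolding e_def using F(1) by simp
  qed
  have inj: "inj_on e (topspace euclidean)"
  proof (rule inj_onI)
    fix x y assume "e x = e y"
    show "x = y"
    proof (rule ccontr)
      assume "x \<noteq> y"
      then have "x < y \<or> y < x" by auto
      then obtain u v where uv: "u < v" "e u = e v" using \<open>e x = e y\<close> by metis
      then obtain \<gamma> where g: "\<gamma> \<in> \<Gamma>" "u \<le> fst \<gamma>" "snd \<gamma> \<le> v" using G2 by blast
      have "e u \<gamma> = 0" "e v \<gamma> = 1" unfolding e_def using F0[OF g(1,2)] F1[OF g(1,3)] g(1) by simp_all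
      then show False using uv(2) by simp
    qed
  qed
  have hsT: "Hausdorff_space (cube_top \<Gamma>)"
    unfolding cube_top_def Hausdorff_space_product_topology
    by (simp add: Hausdorff_space_subtopology)
  have emb: "embedding_map euclidean (cube_top \<Gamma>) e"
    by (rule continuous_imp_embedding_map[OF ce cs hsT inj])
  then have hom: "(euclidean :: 'a topology) homeomorphic_space subtopology (cube_top \<Gamma>) (e ` topspace euclidean)"
    unfolding embedding_map_def using homeomorphic_map_imp_homeomorphic_space by blast
  have sub: "e ` topspace euclidean \<subseteq> Sigma01 \<Gamma>"
  proof
    fix w assume "w \<in> e ` topspace euclidean"
    then obtain x where x: "w = e x" by auto
    have "e x \<in> topspace (cube_top \<Gamma>)"
      using ce unfolding continuous_map_def by auto
    moreover have "{\<gamma>\<in>\<Gamma>. e x \<gamma> \<notin> {0, 1}} \<subseteq> {\<gamma>\<in>\<Gamma>. fst \<gamma> < x \<and> x < snd \<gamma>}"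
    proof
      fix \<gamma> assume "\<gamma> \<in> {\<gamma>\<in>\<Gamma>. e x \<gamma> \<notin> {0, 1}}"
      then have g: "\<gamma> \<in> \<Gamma>" "F \<gamma> x \<notin> {0,1}" unfolding e_def by auto
      have "\<not> x \<le> fst \<gamma>" using F0[OF g(1)] g(2) by auto
      moreover have "\<not> snd \<gamma> \<le> x" using F1[OF g(1)] g(2) by auto
      ultimately show "\<gamma> \<in> {\<gamma>\<in>\<Gamma>. fst \<gamma> < x \<and> x < snd \<gamma>}" using g(1) by (simp add: not_le)
    qed
    then have "countable {\<gamma>\<in>\<Gamma>. e x \<gamma> \<notin> {0, 1}}" using G3 countable_subset by blast
    ultimately show "w \<in> Sigma01 \<Gamma>" unfolding Sigma01_def x by simp
  qed
  show ?thesis unfolding almost_totally_disconnected_def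
    using sub hom by blast
qed

end
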